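(* Let $k\ge 2$ and let $T\in\mathbb{R}^{n_1\times\cdots\times n_k}$ admit a decomposition \[ T=\sum_{i=1}^r x_i^{(1)}\otimes\cdots\otimes x_i^{(k)},\qquad x_i^{(j)}\in\mathbb{R}^{n_j}\setminus\{0\}. \] Suppose there is a parameter $\mu$ with $r\mu\le \tfrac12\min_j n_j$ such that for every $j\in[k]$, \[ \sup_{i\in[r]}\frac{\|x_i^{(j)}\|_\infty^2}{\|x_i^{(j)}\|_2^2}\le\frac{\mu}{n_j},\qquad \sup_{i\ne i'\in[r]}\frac{|\langle x_i^{(j)},x_{i'}^{(j)}\rangle|}{\|x_i^{(j)}\|_2\,\|x_{i'}^{(j)}\|_2}\le\frac{\mu}{n_j}. \] Then $T$ is $(\mu_1,\mu_2)$-incoherent (in the tensor sense defined in the context) with $\mu_1\le 2\mu$ and $\mu_2\le 2\mu^{k-1}$.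
   Context: For $T\in\mathbb{R}^{n_1\times\cdots\times n_k}$ and $j\in[k]$, the mode-$j$ unfolding $\operatorname{unfold}_j(T)\in\mathbb{R}^{n_j\times m_j}$, $m_j=\prod_{\ell\ne j}n_\ell$, is defined by $[\operatorname{unfold}_j(T)]_{i_j,(i_1,\dots,i_{j-1},i_{j+1},\dots,i_k)}=T_{i_1,\dots,i_k}$. For a matrix $U$, $\|U\|_{2,\infty}=\max_i\|U_{i,\cdot}\|_2$ (maximum row Euclidean norm). The tensor $T$ is called $(\mu_1,\mu_2)$-incoherent if for every $j\in[k]$, writing the (compact) SVD $\operatorname{unfold}_j(T)=U^{(j)}\Sigma^{(j)}(V^{(j)})^\top$ with $U^{(j)}\in\mathbb{R}^{n_j\times r_j}$, $V^{(j)}\in\mathbb{R}^{m_j\times r_j}$, $r_j=\operatorname{rank}(\operatorname{unfold}_j(T))$, one has $\|U^{(j)}\|_{2,\infty}^2\le \mu_1 r_j/n_j$ and $\|V^{(j)}\|_{2,\infty}^2\le \mu_2 r_j/m_j$. *)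

theory Defs
  imports "HOL-Analysis.Analysis" "Jordan_Normal_Form.DL_Rank"
begin

text \<open>Order-k tensors of size n 0 x ... x n (k-1) are represented as functions
  from index functions (nat => nat) to reals; only indices idx with idx j < n j
  for all j < k are meaningful.\<close>

definition other_dims_prod :: "nat \<Rightarrow> (nat \<Rightarrow> nat) \<Rightarrow> nat \<Rightarrow> nat" where
  "other_dims_prod k n j = (\<Prod>l\<in>{l. l < k \<and> l \<noteq> j}. n l)"

text \<open>Decoding a column index c < m_j of the mode-j unfolding into the
  multi-index (i_l)_{l \<noteq> j} (mixed radix, fixed bijection); a is the mode-j index.\<close>
definition unfold_index :: "nat \<Rightarrow> (nat \<Rightarrow> nat) \<Rightarrow> nat \<Rightarrow> nat \<Rightarrow> nat \<Rightarrow> (nat \<Rightarrow> nat)" where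
  "unfold_index k n j a c = (\<lambda>l. if l = j then a
      else if l < k then (c div (\<Prod>l'\<in>{l'. l' < l \<and> l' \<noteq> j}. n l')) mod n l
      else 0)"

definition unfold_mat :: "nat \<Rightarrow> (nat \<Rightarrow> nat) \<Rightarrow> nat \<Rightarrow> ((nat \<Rightarrow> nat) \<Rightarrow> real) \<Rightarrow> real mat" where
  "unfold_mat k n j T = mat (n j) (other_dims_prod k n j) (\<lambda>(a, c). T (unfold_index k n j a c))"

definition compact_svd :: "real mat \<Rightarrow> real mat \<Rightarrow> real mat \<Rightarrow> real mat \<Rightarrow> bool" where
  "compact_svd A U S V \<longleftrightarrow>
     (let r = dim_col U in
       U \<in> carrier_mat (dim_row A) r \<and> S \<in> carrier_mat r r \<and> V \<in> carrier_mat (dim_col A) r \<and>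
       transpose_mat U * U = 1\<^sub>m r \<and> transpose_mat V * V = 1\<^sub>m r \<and>
       (\<forall>a<r. \<forall>b<r. a \<noteq> b \<longrightarrow> S $$ (a, b) = 0) \<and> (\<forall>a<r. S $$ (a, a) > 0) \<and>
       A = U * S * transpose_mat V)"

definition norm_2inf_sq :: "real mat \<Rightarrow> real" where
  "norm_2inf_sq U = (if dim_row U = 0 then 0
     else Max ((\<lambda>i. \<Sum>c<dim_col U. (U $$ (i, c))\<^sup>2) ` {..<dim_row U}))"

definition tensor_incoherent ::
  "nat \<Rightarrow> (nat \<Rightarrow> nat) \<Rightarrow> ((nat \<Rightarrow> nat) \<Rightarrow> real) \<Rightarrow> real \<Rightarrow> real \<Rightarrow> bool" where
  "tensor_incoherent k n T \<mu>1 \<mu>2 \<longleftrightarrow>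
     (\<forall>j<k. \<forall>U S V. compact_svd (unfold_mat k n j T) U S V \<longrightarrow>
        (let rj = vec_space.rank (n j) (unfold_mat k n j T); mj = other_dims_prod k n j in
          dim_col U = rj \<and>
          norm_2inf_sq U \<le> \<mu>1 * real rj / real (n j) \<and>
          norm_2inf_sq V \<le> \<mu>2 * real rj / real mj))"

definition vnorm2 :: "nat \<Rightarrow> (nat \<Rightarrow> real) \<Rightarrow> real" where
  "vnorm2 d v = sqrt (\<Sum>l<d. (v l)\<^sup>2)"

definition vnorm_inf :: "nat \<Rightarrow> (nat \<Rightarrow> real) \<Rightarrow> real" where
  "vnorm_inf d v = (if d = 0 then 0 else Max ((\<lambda>l. \<bar>v l\<bar>) ` {..<d}))"

definition vinner :: "nat \<Rightarrow> (nat \<Rightarrow> real) \<Rightarrow> (nat \<Rightarrow> real) \<Rightarrow> real" where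
  "vinner d v w = (\<Sum>l<d. v l * w l)"

end

theory Submission
  imports Defs
begin

lemma (in vec_space) rank_mult_le:
  assumes B: "B \<in> carrier_mat n p" and C: "C \<in> carrier_mat p q"
  shows "rank (B * C) \<le> rank B"
proof -
  have BC: "B * C \<in> carrier_mat n q" using B C by auto
  have sub: "set (cols (B * C)) \<subseteq> span (set (cols B))"
  proof
    fix v assume "v \<in> set (cols (B * C))"
    then obtain i where i: "i < dim_col (B * C)" "v = col (B * C) i"
      by (metis cols_length cols_nth in_set_conv_nth)
    have "v = B *\<^sub>v col C i" using i B C by auto
    moreover have "col C i \<in> carrier_vec (dim_col B)" using B C by auto
    ultimately have "v \<in> col_space B" unfolding col_space_eq[OF B] using B by auto
    then show "v \<in> span (set (cols B))" unfolding col_space_def .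
  qed
  have cB: "set (cols B) \<subseteq> carrier_vec n" using B cols_dim by blast
  have vs: "vectorspace class_ring (vs (span (set (cols B))))"
    using span_is_subspace[THEN subspace_is_vs, OF cB] by auto
  have sm: "submodule class_ring (span (set (cols B))) V" using cB by (simp add: span_is_submodule)
  have ss: "subspace class_ring (span (set (cols (B*C)))) (vs (span (set (cols B))))"
    using vectorspace.span_is_subspace[OF vs, of "set (cols (B*C))", unfolded
    span_li_not_depend(1)[OF sub sm]] sub by auto
  have fin_dim:"vectorspace.fin_dim class_ring (vs (span (set (cols B))))"
       "vectorspace.fin_dim class_ring (vs (span (set (cols B)))\<lparr>carrier := span (set (cols (B*C)))\<rparr>)"
    using fin_dim_span_cols B BC by auto
  show ?thesis unfolding rank_def using vectorspace.subspace_dim[OF vs ss fin_dim(1) fin_dim(2)] by simp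
qed

lemma (in vec_space) rank_full_kernel:
  assumes A: "A \<in> carrier_mat n nc"
    and ker: "\<And>v. v \<in> carrier_vec nc \<Longrightarrow> A *\<^sub>v v = 0\<^sub>v n \<Longrightarrow> v = 0\<^sub>v nc"
  shows "rank A = nc"
proof -
  have dist: "distinct (cols A)"
  proof (rule ccontr)
    assume "\<not> distinct (cols A)"
    then obtain i i' where ii: "i < length (cols A)" "i' < length (cols A)" "i \<noteq> i'" "cols A ! i = cols A ! i'"
      by (auto simp: distinct_conv_nth)
    define v where "v = vec nc (\<lambda>t. if t = i then 1 else if t = i' then -1 else (0::'a))"
    have v: "v \<in> carrier_vec nc" unfolding v_def by auto
    have inc: "i < nc" "i' < nc" using ii A by auto
    have "col A i = col A i'" using ii A by auto
    have "A *\<^sub>v v = 0\<^sub>v n"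
    proof (rule eq_vecI)
      fix a assume "a < dim_vec (0\<^sub>v n :: 'a vec)"
      then have a: "a < n" by auto
      have "A $$ (a, i) = A $$ (a, i')" using \<open>col A i = col A i'\<close> a A inc
        by (metis carrier_matD(1) col_def index_vec)
      have "(A *\<^sub>v v) $ a = (\<Sum>t<nc. A $$ (a, t) * v $ t)"
        using a A v by (auto simp: mult_mat_vec_def scalar_prod_def atLeast0LessThan)
      also have "\<dots> = (\<Sum>t<nc. (if t = i then A $$ (a, i) else 0) + (if t = i' then - A $$ (a, i') else 0))"
        by (rule sum.cong) (use ii in \<open>auto simp: v_def\<close>)
      also have "\<dots> = 0" using inc \<open>A $$ (a, i) = A $$ (a, i')\<close> by (simp add: sum.distrib)
      finally show "(A *\<^sub>v v) $ a = 0\<^sub>v n $ a" using a by simp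
    qed (use A in auto)
    then have "v = 0\<^sub>v nc" using ker v by auto
    moreover have "v $ i = 1" using inc unfolding v_def by auto
    ultimately show False using inc by auto
  qed
  have "lin_indpt (set (cols A))"
  proof
    assume "lin_dep (set (cols A))"
    then obtain v where "v \<in> carrier_vec nc" "v \<noteq> 0\<^sub>v nc" "A *\<^sub>v v = 0\<^sub>v n"
      using lin_depE[OF A _ dist] by blast
    then show False using ker by auto
  qed
  then show ?thesis using lin_indpt_full_rank[OF A dist] by auto
qed

definition sinv :: "real mat \<Rightarrow> real mat" where
  "sinv S = mat (dim_row S) (dim_row S) (\<lambda>(a,b). if a = b then 1 / S $$ (a,a) else 0)"

lemma svd_struct:
  fixes A U S V :: "real mat"
  assumes svd: "compact_svd A U S V"
  defines "\<rho> \<equiv> dim_col U"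
  shows "U \<in> carrier_mat (dim_row A) \<rho>" "S \<in> carrier_mat \<rho> \<rho>" "V \<in> carrier_mat (dim_col A) \<rho>"
    "transpose_mat U * U = 1\<^sub>m \<rho>" "transpose_mat V * V = 1\<^sub>m \<rho>"
    "U = A * (V * sinv S)" "V = transpose_mat A * (U * sinv S)"
proof -
  note d = svd[unfolded compact_svd_def Let_def, folded \<rho>_def]
  show U: "U \<in> carrier_mat (dim_row A) \<rho>" and S: "S \<in> carrier_mat \<rho> \<rho>" and V: "V \<in> carrier_mat (dim_col A) \<rho>"
    and UU: "transpose_mat U * U = 1\<^sub>m \<rho>" and VV: "transpose_mat V * V = 1\<^sub>m \<rho>" using d by auto
  have offd: "\<And>a b. a < \<rho> \<Longrightarrow> b < \<rho> \<Longrightarrow> a \<noteq> b \<Longrightarrow> S $$ (a, b) = 0"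
    and pos: "\<And>a. a < \<rho> \<Longrightarrow> S $$ (a, a) > 0" and AE: "A = U * S * transpose_mat V" using d by auto
  have Si: "sinv S \<in> carrier_mat \<rho> \<rho>" using S unfolding sinv_def by auto
  have SSi: "S * sinv S = 1\<^sub>m \<rho>"
  proof (rule eq_matI)
    fix a b assume ab: "a < dim_row (1\<^sub>m \<rho> :: real mat)" "b < dim_col (1\<^sub>m \<rho> :: real mat)"
    then have ab': "a < \<rho>" "b < \<rho>" by auto
    have "(S * sinv S) $$ (a, b) = (\<Sum>t<\<rho>. S $$ (a, t) * sinv S $$ (t, b))"
      using ab' S Si by (auto simp: scalar_prod_def atLeast0LessThan)
    also have "\<dots> = (\<Sum>t<\<rho>. if t = a then S $$ (a, t) * sinv S $$ (t, b) else 0)"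
      by (rule sum.cong) (use ab' offd in auto)
    also have "\<dots> = S $$ (a, a) * sinv S $$ (a, b)" using ab' by simp
    also have "\<dots> = (1\<^sub>m \<rho>) $$ (a, b)" using ab' S pos[OF ab'(1)] unfolding sinv_def by auto
    finally show "(S * sinv S) $$ (a, b) = (1\<^sub>m \<rho>) $$ (a, b)" .
  qed (use S Si in auto)
  have ST: "transpose_mat S = S"
  proof (rule eq_matI)
    fix a b assume "a < dim_row S" "b < dim_col S"
    then show "transpose_mat S $$ (a, b) = S $$ (a, b)" using S offd by (cases "a = b") auto
  qed (use S in auto)
  have Vt: "transpose_mat V \<in> carrier_mat \<rho> (dim_col A)" using V by auto
  have Ut: "transpose_mat U \<in> carrier_mat \<rho> (dim_row A)" using U by auto
  have "A * (V * sinv S) = U * S * transpose_mat V * (V * sinv S)" using AE by simp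
  also have "\<dots> = U * (S * (transpose_mat V * (V * sinv S)))"
  proof -
    have "U * S * transpose_mat V * (V * sinv S) = U * S * (transpose_mat V * (V * sinv S))"
      by (rule assoc_mult_mat[OF mult_carrier_mat[OF U S] Vt mult_carrier_mat[OF V Si]])
    also have "\<dots> = U * (S * (transpose_mat V * (V * sinv S)))"
      by (rule assoc_mult_mat[OF U S mult_carrier_mat[OF Vt mult_carrier_mat[OF V Si]]])
    finally show ?thesis .
  qed
  also have "transpose_mat V * (V * sinv S) = sinv S"
    using assoc_mult_mat[OF Vt V Si, symmetric] VV Si by simp
  also have "U * (S * sinv S) = U" using SSi U by simp
  finally show "U = A * (V * sinv S)" by simp
  have "transpose_mat A = transpose_mat (transpose_mat V) * transpose_mat (U * S)"
    unfolding AE by (rule transpose_mult[OF mult_carrier_mat[OF U S] Vt])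
  also have "\<dots> = V * (S * transpose_mat U)"
    using transpose_mult[OF U S] ST by simp
  finally have AT: "transpose_mat A = V * (S * transpose_mat U)" .
  have "transpose_mat A * (U * sinv S) = V * (S * (transpose_mat U * (U * sinv S)))"
    unfolding AT using assoc_mult_mat[OF V mult_carrier_mat[OF S Ut] mult_carrier_mat[OF U Si]]
      assoc_mult_mat[OF S Ut mult_carrier_mat[OF U Si]] by simp
  also have "transpose_mat U * (U * sinv S) = sinv S"
    using assoc_mult_mat[OF Ut U Si, symmetric] UU Si by simp
  also have "V * (S * sinv S) = V" using SSi V by simp
  finally show "V = transpose_mat A * (U * sinv S)" by simp
qed


lemma svd_rank:
  fixes A U S V :: "real mat"
  assumes svd: "compact_svd A U S V"
  shows "dim_col U = vec_space.rank (dim_row A) A"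
proof -
  define \<rho> where "\<rho> = dim_col U"
  note st = svd_struct[OF svd, folded \<rho>_def]
  have U: "U \<in> carrier_mat (dim_row A) \<rho>" and S: "S \<in> carrier_mat \<rho> \<rho>"
    and V: "V \<in> carrier_mat (dim_col A) \<rho>" using st(1-3) by auto
  have A: "A \<in> carrier_mat (dim_row A) (dim_col A)" by auto
  have Si: "sinv S \<in> carrier_mat \<rho> \<rho>" using S unfolding sinv_def by auto
  have AE: "A = U * (S * transpose_mat V)"
  proof -
    have "A = U * S * transpose_mat V" using svd unfolding compact_svd_def Let_def by auto
    also have "\<dots> = U * (S * transpose_mat V)"
      by (rule assoc_mult_mat[OF U S]) (use V in auto)
    finally show ?thesis .
  qed
  have "vec_space.rank (dim_row A) A \<le> vec_space.rank (dim_row A) U"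
  proof -
    have "S * transpose_mat V \<in> carrier_mat \<rho> (dim_col A)" using S V by simp
    from vec_space.rank_mult_le[OF U this] show ?thesis by (subst (1) AE) 
  qed
  moreover have "vec_space.rank (dim_row A) U \<le> vec_space.rank (dim_row A) A"
  proof -
    have "V * sinv S \<in> carrier_mat (dim_col A) \<rho>" using Si V by simp
    from vec_space.rank_mult_le[OF A this] show ?thesis using st(6) by simp
  qed
  moreover have "vec_space.rank (dim_row A) U = \<rho>"
  proof (rule vec_space.rank_full_kernel[OF U])
    fix v :: "real vec" assume v: "v \<in> carrier_vec \<rho>" and Uv: "U *\<^sub>v v = 0\<^sub>v (dim_row A)"
    have "v = (transpose_mat U * U) *\<^sub>v v" using st(4) v by simp
    also have "\<dots> = transpose_mat U *\<^sub>v (U *\<^sub>v v)" using U v by auto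
    also have "\<dots> = 0\<^sub>v \<rho>" unfolding Uv using U by auto
    finally show "v = 0\<^sub>v \<rho>" .
  qed
  ultimately show ?thesis unfolding \<rho>_def by linarith
qed

lemma row_bound:
  fixes U :: "real mat" and p \<beta> :: "nat \<Rightarrow> nat \<Rightarrow> real"
  assumes U: "U \<in> carrier_mat N \<rho>" and UU: "transpose_mat U * U = 1\<^sub>m \<rho>"
    and rep: "\<And>a c. a < N \<Longrightarrow> c < \<rho> \<Longrightarrow> U $$ (a, c) = (\<Sum>i<r. p i a * \<beta> i c)"
    and gram: "\<And>z. (\<Sum>i<r. (z i)\<^sup>2) \<le> 2 * (\<Sum>a<N. (\<Sum>i<r. z i * p i a)\<^sup>2)"
    and l: "l < N"
  shows "(\<Sum>c<\<rho>. (U $$ (l, c))\<^sup>2) \<le> 2 * (\<Sum>i<r. (p i l)\<^sup>2)"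
proof -
  have orth: "(\<Sum>a<N. U $$ (a, c) * U $$ (a, c')) = (if c = c' then 1 else 0)"
    if "c < \<rho>" "c' < \<rho>" for c c'
  proof -
    have "(transpose_mat U * U) $$ (c, c') = (\<Sum>a<N. U $$ (a, c) * U $$ (a, c'))"
      using that U by (auto simp: scalar_prod_def atLeast0LessThan)
    then show ?thesis using UU that by auto
  qed
  define w where "w c = U $$ (l, c)" for c
  define s where "s = (\<Sum>c<\<rho>. (w c)\<^sup>2)"
  define v where "v a = (\<Sum>c<\<rho>. U $$ (a, c) * w c)" for a
  define z where "z i = (\<Sum>c<\<rho>. \<beta> i c * w c)" for i
  define P where "P = (\<Sum>i<r. (p i l)\<^sup>2)"
  have s0: "s \<ge> 0" unfolding s_def by (auto intro: sum_nonneg)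
  have P0: "P \<ge> 0" unfolding P_def by (auto intro: sum_nonneg)
  have vl: "v l = s" unfolding v_def s_def w_def by (simp add: power2_eq_square)
  have vsq: "(\<Sum>a<N. (v a)\<^sup>2) = s"
  proof -
    have "(\<Sum>a<N. (v a)\<^sup>2) = (\<Sum>a<N. \<Sum>c<\<rho>. \<Sum>c'<\<rho>. w c * w c' * (U $$ (a, c) * U $$ (a, c')))"
      unfolding v_def power2_eq_square sum_product by (simp add: algebra_simps)
    also have "\<dots> = (\<Sum>c<\<rho>. \<Sum>c'<\<rho>. w c * w c' * (\<Sum>a<N. U $$ (a, c) * U $$ (a, c')))"
      by (simp add: sum.swap[of _ "{..<N}"] sum_distrib_left)
    also have "\<dots> = (\<Sum>c<\<rho>. \<Sum>c'<\<rho>. if c' = c then w c * w c else 0)"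
      by (rule sum.cong[OF refl], rule sum.cong[OF refl]) (auto simp: orth)
    also have "\<dots> = s" unfolding s_def by (simp add: power2_eq_square)
    finally show ?thesis .
  qed
  have vz: "v a = (\<Sum>i<r. z i * p i a)" if "a < N" for a
  proof -
    have "v a = (\<Sum>c<\<rho>. \<Sum>i<r. p i a * \<beta> i c * w c)"
      unfolding v_def by (rule sum.cong[OF refl]) (simp add: rep that sum_distrib_right)
    also have "\<dots> = (\<Sum>i<r. z i * p i a)"
      unfolding z_def by (subst sum.swap) (simp add: sum_distrib_left sum_distrib_right algebra_simps)
    finally show ?thesis .
  qed
  have zs: "(\<Sum>i<r. (z i)\<^sup>2) \<le> 2 * s"
    using gram[of z] vsq vz by simp
  have "s\<^sup>2 = (\<Sum>i<r. z i * p i l)\<^sup>2" using vl vz[OF l] by simp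
  also have "\<dots> \<le> (\<Sum>i<r. (z i)\<^sup>2) * P" unfolding P_def by (rule Cauchy_Schwarz_ineq_sum)
  also have "\<dots> \<le> 2 * s * P" using zs P0 by (simp add: mult_right_mono)
  finally have "s * s \<le> (2 * P) * s" by (simp add: power2_eq_square algebra_simps)
  then have "s \<le> 2 * P" using s0 by (cases "s = 0") (use P0 in auto)
  then show ?thesis unfolding s_def w_def P_def .
qed

lemma gram_bound:
  fixes p :: "nat \<Rightarrow> nat \<Rightarrow> real" and z :: "nat \<Rightarrow> real"
  assumes unit: "\<And>i. i < r \<Longrightarrow> (\<Sum>a<N. (p i a)\<^sup>2) = 1"
    and off: "\<And>i i'. i < r \<Longrightarrow> i' < r \<Longrightarrow> i \<noteq> i' \<Longrightarrow> \<bar>\<Sum>a<N. p i a * p i' a\<bar> \<le> \<epsilon>"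
    and eps0: "\<epsilon> \<ge> 0" and reps: "real r * \<epsilon> \<le> 1 / 2"
  shows "(\<Sum>i<r. (z i)\<^sup>2) \<le> 2 * (\<Sum>a<N. (\<Sum>i<r. z i * p i a)\<^sup>2)"
proof -
  define g where "g i i' = (\<Sum>a<N. p i a * p i' a)" for i i'
  define Z where "Z = (\<Sum>i<r. (z i)\<^sup>2)"
  have "(\<Sum>a<N. (\<Sum>i<r. z i * p i a)\<^sup>2) = (\<Sum>a<N. \<Sum>i<r. \<Sum>i'<r. z i * z i' * (p i a * p i' a))"
    unfolding power2_eq_square sum_product by (simp add: algebra_simps)
  also have "\<dots> = (\<Sum>i<r. \<Sum>i'<r. z i * z i' * g i i')"
    unfolding g_def by (simp add: sum.swap[of _ "{..<N}"] sum_distrib_left)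
  finally have E: "(\<Sum>a<N. (\<Sum>i<r. z i * p i a)\<^sup>2) = (\<Sum>i<r. \<Sum>i'<r. z i * z i' * g i i')" .
  have T: "z i * z i' * g i i' \<ge> (if i = i' then (z i)\<^sup>2 else 0) - \<epsilon> * (\<bar>z i\<bar> * \<bar>z i'\<bar>)"
    if "i < r" "i' < r" for i i'
  proof (cases "i = i'")
    case True
    then show ?thesis using unit[OF that(1)] eps0 unfolding g_def
      by (simp add: power2_eq_square)
  next
    case False
    have "\<bar>z i * z i' * g i i'\<bar> \<le> (\<bar>z i\<bar> * \<bar>z i'\<bar>) * \<epsilon>"
      unfolding abs_mult using off[OF that False] unfolding g_def
      by (intro mult_left_mono) auto
    then show ?thesis using False by (simp add: algebra_simps abs_le_iff)
  qed
  have "(\<Sum>i<r. \<Sum>i'<r. z i * z i' * g i i') \<ge>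
      (\<Sum>i<r. \<Sum>i'<r. (if i = i' then (z i)\<^sup>2 else 0) - \<epsilon> * (\<bar>z i\<bar> * \<bar>z i'\<bar>))"
    by (intro sum_mono) (use T in auto)
  also have "(\<Sum>i<r. \<Sum>i'<r. (if i = i' then (z i)\<^sup>2 else 0) - \<epsilon> * (\<bar>z i\<bar> * \<bar>z i'\<bar>))
      = Z - \<epsilon> * (\<Sum>i<r. \<bar>z i\<bar>)\<^sup>2"
    unfolding Z_def power2_eq_square sum_product sum_subtractf
    by (simp add: sum_distrib_left)
  finally have L: "(\<Sum>i<r. \<Sum>i'<r. z i * z i' * g i i') \<ge> Z - \<epsilon> * (\<Sum>i<r. \<bar>z i\<bar>)\<^sup>2" .
  have CS: "(\<Sum>i<r. \<bar>z i\<bar>)\<^sup>2 \<le> real r * Z"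
  proof -
    have "(\<Sum>i<r. 1 * \<bar>z i\<bar>)\<^sup>2 \<le> (\<Sum>i<r. 1\<^sup>2) * (\<Sum>i<r. \<bar>z i\<bar>\<^sup>2)"
      by (rule Cauchy_Schwarz_ineq_sum)
    then show ?thesis unfolding Z_def by simp
  qed
  have Z0: "Z \<ge> 0" unfolding Z_def by (auto intro: sum_nonneg)
  have "\<epsilon> * (\<Sum>i<r. \<bar>z i\<bar>)\<^sup>2 \<le> \<epsilon> * (real r * Z)" using CS eps0 by (rule mult_left_mono)
  also have "\<dots> = (real r * \<epsilon>) * Z" by simp
  also have "\<dots> \<le> (1/2) * Z" using reps Z0 by (rule mult_right_mono)
  finally show ?thesis using L E unfolding Z_def by linarith
qed

lemma mat_vec_entry:
  fixes B :: "real mat"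
  assumes "B \<in> carrier_mat nr nc" "v \<in> carrier_vec nc" "a < nr"
  shows "(B *\<^sub>v v) $ a = (\<Sum>t<nc. B $$ (a, t) * v $ t)"
  using assms by (auto simp: scalar_prod_def atLeast0LessThan)

lemma sq_sum_zero:
  fixes f :: "nat \<Rightarrow> real"
  assumes "(\<Sum>a<N. (f a)\<^sup>2) = 0" "a < N"
  shows "f a = 0"
proof -
  have "\<forall>a\<in>{..<N}. (f a)\<^sup>2 = 0" using assms(1) by (subst sum_nonneg_eq_0_iff[symmetric]) auto
  then show ?thesis using assms(2) by auto
qed

lemma rank_ge_r:
  fixes A U S V :: "real mat" and p q :: "nat \<Rightarrow> nat \<Rightarrow> real"
  assumes svd: "compact_svd A U S V"
    and A: "A \<in> carrier_mat N m"
    and Aent: "\<And>a c. a < N \<Longrightarrow> c < m \<Longrightarrow> A $$ (a, c) = (\<Sum>i<r. p i a * q i c)"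
    and injP: "\<And>z. (\<And>a. a < N \<Longrightarrow> (\<Sum>i<r. z i * p i a) = 0) \<Longrightarrow> (\<And>i. i < r \<Longrightarrow> z i = 0)"
    and injQ: "\<And>z. (\<And>c. c < m \<Longrightarrow> (\<Sum>i<r. z i * q i c) = 0) \<Longrightarrow> (\<And>i. i < r \<Longrightarrow> z i = 0)"
  shows "r \<le> dim_col U"
proof -
  define \<rho> where "\<rho> = dim_col U"
  note st = svd_struct[OF svd, folded \<rho>_def]
  have dA: "dim_row A = N" "dim_col A = m" using A by auto
  have U: "U \<in> carrier_mat N \<rho>" and S: "S \<in> carrier_mat \<rho> \<rho>"
    and V: "V \<in> carrier_mat m \<rho>" using st(1-3) dA by auto
  have Vt: "transpose_mat V \<in> carrier_mat \<rho> m" using V by auto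
  define Pm where "Pm = mat N r (\<lambda>(a, i). p i a)"
  define Qm where "Qm = mat m r (\<lambda>(c, i). q i c)"
  have Pm: "Pm \<in> carrier_mat N r" and Pt: "transpose_mat Pm \<in> carrier_mat r N"
    and Qm: "Qm \<in> carrier_mat m r" unfolding Pm_def Qm_def by auto
  define M1 where "M1 = transpose_mat Pm * U"
  define M2 where "M2 = S * (transpose_mat V * Qm)"
  have M1: "M1 \<in> carrier_mat r \<rho>" unfolding M1_def using Pt U by auto
  have M2: "M2 \<in> carrier_mat \<rho> r" unfolding M2_def using S Vt Qm by auto
  have AE: "A = U * S * transpose_mat V" using svd unfolding compact_svd_def Let_def by auto
  have AQ: "A * Qm = U * M2"
  proof -
    have "A * Qm = U * S * transpose_mat V * Qm" using AE by simp
    also have "\<dots> = U * S * (transpose_mat V * Qm)"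
      by (rule assoc_mult_mat[OF mult_carrier_mat[OF U S] Vt Qm])
    also have "\<dots> = U * M2" unfolding M2_def by (rule assoc_mult_mat[OF U S mult_carrier_mat[OF Vt Qm]])
    finally show ?thesis .
  qed
  have MM: "M1 * M2 = transpose_mat Pm * (A * Qm)"
    unfolding AQ M1_def by (rule assoc_mult_mat[OF Pt U M2])
  have "vec_space.rank r (M1 * M2) \<le> vec_space.rank r M1" by (rule vec_space.rank_mult_le[OF M1 M2])
  also have "\<dots> \<le> \<rho>" by (rule vec_space.rank_le_nc[OF M1])
  finally have le: "vec_space.rank r (M1 * M2) \<le> \<rho>" .
  have "vec_space.rank r (M1 * M2) = r"
  proof (rule vec_space.rank_full_kernel)
    show "M1 * M2 \<in> carrier_mat r r" using M1 M2 by auto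
    fix v :: "real vec" assume v: "v \<in> carrier_vec r" and Mv: "(M1 * M2) *\<^sub>v v = 0\<^sub>v r"
    define y where "y c = (\<Sum>i<r. q i c * v $ i)" for c
    define w where "w t = (\<Sum>c<m. q t c * y c)" for t
    define u where "u a = (\<Sum>t<r. w t * p t a)" for a
    have Qv: "(Qm *\<^sub>v v) $ c = y c" if "c < m" for c
      using mat_vec_entry[OF Qm v that] that unfolding y_def Qm_def by simp
    have Qvc: "Qm *\<^sub>v v \<in> carrier_vec m" using Qm v by auto
    have AQv: "(A *\<^sub>v (Qm *\<^sub>v v)) $ a = u a" if "a < N" for a
    proof -
      have "(A *\<^sub>v (Qm *\<^sub>v v)) $ a = (\<Sum>c<m. (\<Sum>i<r. p i a * q i c) * y c)"
        using mat_vec_entry[OF A Qvc that] Qv Aent[OF that] by simp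
      also have "\<dots> = (\<Sum>c<m. \<Sum>i<r. p i a * q i c * y c)" by (simp add: sum_distrib_right)
      also have "\<dots> = (\<Sum>i<r. \<Sum>c<m. p i a * q i c * y c)" by (rule sum.swap)
      also have "\<dots> = u a" unfolding u_def w_def sum_distrib_right
        by (intro sum.cong refl) (simp add: ac_simps)

      finally show ?thesis .
    qed
    have AQvc: "A *\<^sub>v (Qm *\<^sub>v v) \<in> carrier_vec N" using A Qvc by auto
    have MMv: "(M1 * M2) *\<^sub>v v = transpose_mat Pm *\<^sub>v (A *\<^sub>v (Qm *\<^sub>v v))"
      unfolding MM using assoc_mult_mat_vec[OF Pt mult_carrier_mat[OF A Qm] v]
        assoc_mult_mat_vec[OF A Qm v] by simp
    have Mv2: "transpose_mat Pm *\<^sub>v (A *\<^sub>v (Qm *\<^sub>v v)) = 0\<^sub>v r" using Mv MMv by simp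
    have eq0: "(\<Sum>a<N. p i a * u a) = 0" if "i < r" for i
    proof -
      have "(transpose_mat Pm *\<^sub>v (A *\<^sub>v (Qm *\<^sub>v v))) $ i = (\<Sum>a<N. p i a * u a)"
        using mat_vec_entry[OF Pt AQvc that] AQv that unfolding Pm_def by simp
      then show ?thesis using Mv2 that by simp
    qed
    have "(\<Sum>t<r. w t * (\<Sum>a<N. p t a * u a)) = (\<Sum>t<r. \<Sum>a<N. w t * p t a * u a)"
      by (simp add: sum_distrib_left mult.assoc)
    also have "\<dots> = (\<Sum>a<N. \<Sum>t<r. w t * p t a * u a)" by (rule sum.swap)
    also have "\<dots> = (\<Sum>a<N. (\<Sum>t<r. w t * p t a) * u a)" by (simp add: sum_distrib_right)
    also have "\<dots> = (\<Sum>a<N. (u a)\<^sup>2)" by (simp add: u_def power2_eq_square)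
    finally have "(\<Sum>a<N. (u a)\<^sup>2) = (\<Sum>t<r. w t * (\<Sum>a<N. p t a * u a))" by simp
    also have "\<dots> = 0" using eq0 by simp
    finally have u2: "(\<Sum>a<N. (u a)\<^sup>2) = 0" .
    have u0: "\<And>a. a < N \<Longrightarrow> u a = 0" by (rule sq_sum_zero[OF u2])
    have w0: "\<And>t. t < r \<Longrightarrow> w t = 0"
    proof -
      fix t assume t: "t < r"
      show "w t = 0"
      proof (rule injP[of w, OF _ t])
        fix a assume "a < N" from u0[OF this] show "(\<Sum>i<r. w i * p i a) = 0" unfolding u_def .
      qed
    qed
    have "(\<Sum>i<r. v $ i * w i) = (\<Sum>i<r. \<Sum>c<m. v $ i * (q i c * y c))"
      unfolding w_def by (simp add: sum_distrib_left)
    also have "\<dots> = (\<Sum>c<m. \<Sum>i<r. v $ i * (q i c * y c))" by (rule sum.swap)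
    also have "\<dots> = (\<Sum>c<m. (\<Sum>i<r. q i c * v $ i) * y c)"
      by (simp add: sum_distrib_right mult.assoc mult.left_commute)
    also have "\<dots> = (\<Sum>c<m. (y c)\<^sup>2)" by (simp add: y_def power2_eq_square)
    finally have "(\<Sum>c<m. (y c)\<^sup>2) = (\<Sum>i<r. v $ i * w i)" by simp
    also have "\<dots> = 0" using w0 by simp
    finally have y2: "(\<Sum>c<m. (y c)\<^sup>2) = 0" .
    have y0: "\<And>c. c < m \<Longrightarrow> y c = 0" by (rule sq_sum_zero[OF y2])
    have "\<And>i. i < r \<Longrightarrow> v $ i = 0"
    proof -
      fix i assume i: "i < r"
      show "v $ i = 0"
      proof (rule injQ[of "\<lambda>i. v $ i", OF _ i])
        fix c assume "c < m" then show "(\<Sum>i<r. v $ i * q i c) = 0"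
          using y0[OF \<open>c < m\<close>] unfolding y_def by (simp only: mult.commute)
      qed
    qed
    then show "v = 0\<^sub>v r" using v by (intro eq_vecI) auto
  qed
  with le show ?thesis unfolding \<rho>_def by simp
qed

definition dig :: "nat set \<Rightarrow> (nat \<Rightarrow> nat) \<Rightarrow> nat \<Rightarrow> nat \<Rightarrow> nat" where
  "dig L n c l = (c div (\<Prod>l'\<in>{l'\<in>L. l' < l}. n l')) mod n l"

lemma sum_split_blocks:
  fixes g :: "nat \<Rightarrow> 'a::comm_monoid_add"
  shows "(\<Sum>c<M * N. g c) = (\<Sum>q<M. \<Sum>c<N. g (c + q * N))"
proof -
  have "(\<Sum>c<M * N. g c) = (\<Sum>q<M. sum g {q * N..<q * N + N})"
    by (rule sum.nat_group[symmetric])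
  also have "\<dots> = (\<Sum>q<M. \<Sum>c<N. g (c + q * N))"
  proof (rule sum.cong[OF refl])
    fix q
    have "sum g {0 + q * N..<N + q * N} = (\<Sum>c\<in>{0..<N}. g (c + q * N))"
      by (rule sum.shift_bounds_nat_ivl)
    then show "sum g {q * N..<q * N + N} = (\<Sum>c<N. g (c + q * N))"
      by (simp add: atLeast0LessThan add.commute)
  qed
  finally show ?thesis .
qed

lemma dig_shift:
  assumes fin: "finite L" and l: "l \<in> L"
  shows "dig L n (c + q * (\<Prod>l'\<in>L. n l')) l = dig L n c l"
proof -
  define P where "P = (\<Prod>l'\<in>{l'\<in>L. l' < l}. n l')"
  have "(\<Prod>l'\<in>insert l {l'\<in>L. l' < l}. n l') dvd (\<Prod>l'\<in>L. n l')"
    by (rule prod_dvd_prod_subset[OF fin]) (use l in auto)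
  moreover have "(\<Prod>l'\<in>insert l {l'\<in>L. l' < l}. n l') = n l * P"
    unfolding P_def by (subst prod.insert) (use fin in auto)
  ultimately obtain K where K: "(\<Prod>l'\<in>L. n l') = n l * P * K" by (auto elim!: dvdE)
  show ?thesis
  proof (cases "P = 0")
    case True then show ?thesis unfolding dig_def P_def[symmetric] by simp
  next
    case False
    have "c + q * (\<Prod>l'\<in>L. n l') = c + ((q * K) * n l) * P" unfolding K by (simp add: ac_simps)
    then have "(c + q * (\<Prod>l'\<in>L. n l')) div P = c div P + (q * K) * n l"
      using False by (metis div_mult_self1 add.commute)
    then show ?thesis unfolding dig_def P_def[symmetric] by simp
  qed
qed

lemma prod_sum_digits:
  fixes f :: "nat \<Rightarrow> nat \<Rightarrow> real"
  assumes "finite L"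
  shows "(\<Sum>c<(\<Prod>l\<in>L. n l). \<Prod>l\<in>L. f l (dig L n c l)) = (\<Prod>l\<in>L. \<Sum>a<n l. f l a)"
  using assms
proof (induction L rule: finite_linorder_max_induct)
  case empty
  then show ?case by simp
next
  case (insert b L)
  define N where "N = (\<Prod>l\<in>L. n l)"
  have bL: "b \<notin> L" using insert.hyps(2) by auto
  have digL: "dig (insert b L) n c l = dig L n c l" if "l \<in> L" for c l
  proof -
    have "{l' \<in> insert b L. l' < l} = {l' \<in> L. l' < l}" using insert.hyps(2) that by auto
    then show ?thesis unfolding dig_def by simp
  qed
  have digb: "{l' \<in> insert b L. l' < b} = L" using insert.hyps(2) by auto
  have digb': "dig (insert b L) n c b = (c div N) mod n b" for c
    unfolding dig_def digb N_def ..
  have PN: "(\<Prod>l\<in>insert b L. n l) = n b * N" unfolding N_def using insert.hyps(1) bL by simp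
  have "(\<Sum>c<(\<Prod>l\<in>insert b L. n l). \<Prod>l\<in>insert b L. f l (dig (insert b L) n c l))
      = (\<Sum>c<n b * N. f b ((c div N) mod n b) * (\<Prod>l\<in>L. f l (dig L n c l)))"
    unfolding PN using insert.hyps(1) bL
    by (intro sum.cong refl) (simp add: digL digb' cong: prod.cong)
  also have "\<dots> = (\<Sum>q<n b. \<Sum>c<N. f b (((c + q * N) div N) mod n b) *
        (\<Prod>l\<in>L. f l (dig L n (c + q * N) l)))"
    by (rule sum_split_blocks)
  also have "\<dots> = (\<Sum>q<n b. \<Sum>c<N. f b q * (\<Prod>l\<in>L. f l (dig L n c l)))"
  proof (intro sum.cong refl)
    fix q c assume q: "q \<in> {..<n b}" and c: "c \<in> {..<N}"
    have "((c + q * N) div N) mod n b = q" using q c by auto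
    moreover have "(\<Prod>l\<in>L. f l (dig L n (c + q * N) l)) = (\<Prod>l\<in>L. f l (dig L n c l))"
      unfolding N_def by (intro prod.cong refl) (simp add: dig_shift[OF insert.hyps(1)])
    ultimately show "f b (((c + q * N) div N) mod n b) * (\<Prod>l\<in>L. f l (dig L n (c + q * N) l))
        = f b q * (\<Prod>l\<in>L. f l (dig L n c l))" by simp
  qed
  also have "\<dots> = (\<Sum>q<n b. f b q) * (\<Sum>c<N. \<Prod>l\<in>L. f l (dig L n c l))"
    by (simp add: sum_product)
  also have "\<dots> = (\<Prod>l\<in>insert b L. \<Sum>a<n l. f l a)"
    using insert.IH insert.hyps(1) bL unfolding N_def by simp
  finally show ?case .
qed

lemma norm_2inf_sq_le:
  assumes "\<And>i. i < dim_row M \<Longrightarrow> (\<Sum>c<dim_col M. (M $$ (i, c))\<^sup>2) \<le> B" and "B \<ge> 0"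
  shows "norm_2inf_sq M \<le> B"
proof (cases "dim_row M = 0")
  case False
  then have ne: "{..<dim_row M} \<noteq> {}" by auto
  show ?thesis unfolding norm_2inf_sq_def using False assms(1)
    by (simp add: Max_le_iff[OF finite_imageI[OF finite_lessThan]] ne)
qed (use assms in \<open>auto simp: norm_2inf_sq_def\<close>)

lemma vnorm2_sq: "(vnorm2 d v)\<^sup>2 = (\<Sum>l<d. (v l)\<^sup>2)"
  unfolding vnorm2_def by (simp add: sum_nonneg)

lemma sq_le_vnorm_inf: "l < d \<Longrightarrow> (v l)\<^sup>2 \<le> (vnorm_inf d v)\<^sup>2"
proof -
  assume l: "l < d"
  have "\<bar>v l\<bar> \<le> vnorm_inf d v" unfolding vnorm_inf_def using l by (auto intro!: Max_ge)
  then have "\<bar>v l\<bar>\<^sup>2 \<le> (vnorm_inf d v)\<^sup>2" by (rule power_mono) simp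
  then show ?thesis by simp
qed

lemma unfold_entry:
  assumes "a < n j" "c < other_dims_prod k n j"
  shows "unfold_mat k n j T $$ (a, c) = T (unfold_index k n j a c)"
  using assms unfolding unfold_mat_def by simp

lemma unfold_index_dig:
  assumes "l < k" "l \<noteq> j"
  shows "unfold_index k n j a c l = dig {l. l < k \<and> l \<noteq> j} n c l"
proof -
  have "{l'. l' < l \<and> l' \<noteq> j} = {l' \<in> {l. l < k \<and> l \<noteq> j}. l' < l}" using assms by auto
  then show ?thesis unfolding unfold_index_def dig_def using assms by simp
qed

lemma mult_entry:
  fixes B C :: "real mat"
  assumes "B \<in> carrier_mat nr p" "C \<in> carrier_mat p nc" "a < nr" "c < nc"
  shows "(B * C) $$ (a, c) = (\<Sum>t<p. B $$ (a, t) * C $$ (t, c))"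
  using assms by (auto simp: scalar_prod_def atLeast0LessThan)

lemma inj_from_gram:
  fixes p :: "nat \<Rightarrow> nat \<Rightarrow> real"
  assumes g: "(\<Sum>i<r. (z i)\<^sup>2) \<le> 2 * (\<Sum>a<N. (\<Sum>i<r. z i * p i a)\<^sup>2)"
    and h: "\<And>a. a < N \<Longrightarrow> (\<Sum>i<r. z i * p i a) = 0" and i: "i < r"
  shows "z i = 0"
proof -
  have "(\<Sum>a<N. (\<Sum>i<r. z i * p i a)\<^sup>2) = 0" using h by simp
  with g have "(\<Sum>i<r. (z i)\<^sup>2) \<le> 0" by simp
  moreover have "(\<Sum>i<r. (z i)\<^sup>2) \<ge> 0" by (auto intro: sum_nonneg)
  ultimately have "(\<Sum>i<r. (z i)\<^sup>2) = 0" by linarith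
  then show ?thesis using sq_sum_zero[of z r i] i by simp
qed

lemma mode_pos:
  fixes k r :: nat and n :: "nat \<Rightarrow> nat" and T :: "(nat \<Rightarrow> nat) \<Rightarrow> real"
    and x :: "nat \<Rightarrow> nat \<Rightarrow> nat \<Rightarrow> real" and \<mu> :: real
  assumes k2: "k \<ge> 2"
    and decomp: "\<And>idx. (\<forall>j<k. idx j < n j) \<Longrightarrow> T idx = (\<Sum>i<r. \<Prod>j<k. x i j (idx j))"
    and nonzero: "\<And>i j. i < r \<Longrightarrow> j < k \<Longrightarrow> \<exists>l<n j. x i j l \<noteq> 0"
    and rmu: "\<And>j. j < k \<Longrightarrow> real r * \<mu> \<le> real (n j) / 2"
    and spiky: "\<And>i j. i < r \<Longrightarrow> j < k \<Longrightarrow>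
        (vnorm_inf (n j) (x i j))\<^sup>2 / (vnorm2 (n j) (x i j))\<^sup>2 \<le> \<mu> / real (n j)"
    and inner: "\<And>i i' j. i < r \<Longrightarrow> i' < r \<Longrightarrow> i \<noteq> i' \<Longrightarrow> j < k \<Longrightarrow>
        \<bar>vinner (n j) (x i j) (x i' j)\<bar> / (vnorm2 (n j) (x i j) * vnorm2 (n j) (x i' j))
          \<le> \<mu> / real (n j)"
    and rpos: "r > 0" and j: "j < k"
    and svd: "compact_svd (unfold_mat k n j T) U S V"
  shows "dim_col U = vec_space.rank (n j) (unfold_mat k n j T) \<and>
     norm_2inf_sq U \<le> 2 * \<mu> * real (vec_space.rank (n j) (unfold_mat k n j T)) / real (n j) \<and>
     norm_2inf_sq V \<le> 2 * \<mu> ^ (k - 1) * real (vec_space.rank (n j) (unfold_mat k n j T)) /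
        real (other_dims_prod k n j)"
proof -
  define A where "A = unfold_mat k n j T"
  define N where "N = n j"
  define L where "L = {l. l < k \<and> l \<noteq> j}"
  define m where "m = other_dims_prod k n j"
  define \<rho> where "\<rho> = dim_col U"
  have finL: "finite L" unfolding L_def by auto
  have mL: "m = (\<Prod>l\<in>L. n l)" unfolding m_def other_dims_prod_def L_def ..
  have A: "A \<in> carrier_mat N m" unfolding A_def N_def m_def unfold_mat_def by auto
  have svdA: "compact_svd A U S V" using svd unfolding A_def .
  note st = svd_struct[OF svdA, folded \<rho>_def]
  have U: "U \<in> carrier_mat N \<rho>" and S: "S \<in> carrier_mat \<rho> \<rho>" and V: "V \<in> carrier_mat m \<rho>"
    using st(1-3) A by auto
  have Si: "sinv S \<in> carrier_mat \<rho> \<rho>" using S unfolding sinv_def by auto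
  have rank: "\<rho> = vec_space.rank N A" using svd_rank[OF svdA] A unfolding \<rho>_def by auto
  have npos: "n l > 0" if "l < k" for l using nonzero[OF rpos that] by auto
  define nx where "nx i l = vnorm2 (n l) (x i l)" for i l
  have nx_sq: "(nx i l)\<^sup>2 = (\<Sum>a<n l. (x i l a)\<^sup>2)" for i l unfolding nx_def by (rule vnorm2_sq)
  have nx_pos: "nx i l > 0" if il: "i < r" "l < k" for i l
  proof -
    obtain a where a: "a < n l" "x i l a \<noteq> 0" using nonzero[OF il] by auto
    have "0 < (x i l a)\<^sup>2" using a by simp
    also have "\<dots> \<le> (\<Sum>a<n l. (x i l a)\<^sup>2)" by (rule member_le_sum) (use a in auto)
    finally have "0 < (\<Sum>a<n l. (x i l a)\<^sup>2)" .
    then show ?thesis unfolding nx_def vnorm2_def by simp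
  qed
  have xinf: "(x i l a)\<^sup>2 / (nx i l)\<^sup>2 \<le> \<mu> / n l" if "i < r" "l < k" "a < n l" for i l a
  proof -
    have "(x i l a)\<^sup>2 / (nx i l)\<^sup>2 \<le> (vnorm_inf (n l) (x i l))\<^sup>2 / (nx i l)\<^sup>2"
      by (rule divide_right_mono[OF sq_le_vnorm_inf[OF that(3)]]) simp
    also have "\<dots> \<le> \<mu> / n l" using spiky[OF that(1,2)] unfolding nx_def .
    finally show ?thesis .
  qed
  have mupos: "\<mu> > 0"
  proof -
    obtain a where a: "a < n 0" "x 0 0 a \<noteq> 0" using nonzero[OF rpos] k2 by fastforce
    have "0 < (x 0 0 a)\<^sup>2 / (nx 0 0)\<^sup>2" using a nx_pos[OF rpos, of 0] k2 by simp
    also have "\<dots> \<le> \<mu> / n 0" using xinf[OF rpos, of 0 a] a k2 by simp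
    finally show ?thesis using npos[of 0] k2 by (simp add: zero_less_divide_iff)
  qed
  have eps: "real r * (\<mu> / n l) \<le> 1 / 2" if "l < k" for l
    using rmu[OF that] npos[OF that] by (simp add: field_simps)
  define y where "y i c = (\<Prod>l\<in>L. x i l (dig L n c l))" for i c
  have kL: "{..<k} = insert j L" using j unfolding L_def by auto
  have jL: "j \<notin> L" unfolding L_def by auto
  have Aent: "A $$ (a, c) = (\<Sum>i<r. x i j a * y i c)" if ac: "a < N" "c < m" for a c
  proof -
    define idx where "idx = unfold_index k n j a c"
    have idxj: "idx j = a" unfolding idx_def unfold_index_def by simp
    have idxl: "idx l = dig L n c l" if "l \<in> L" for l
      using that unfolding idx_def L_def by (simp add: unfold_index_dig)
    have valid: "\<forall>l<k. idx l < n l"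
    proof (intro allI impI)
      fix l assume l: "l < k"
      show "idx l < n l"
      proof (cases "l = j")
        case True then show ?thesis using idxj ac unfolding N_def by simp
      next
        case False
        then have "l \<in> L" using l unfolding L_def by auto
        then show ?thesis using idxl npos[OF l] unfolding dig_def by simp
      qed
    qed
    have "A $$ (a, c) = T idx" unfolding A_def idx_def
      using unfold_entry ac unfolding N_def m_def by blast
    also have "\<dots> = (\<Sum>i<r. \<Prod>l<k. x i l (idx l))" using decomp valid by blast
    also have "\<dots> = (\<Sum>i<r. x i j a * y i c)"
    proof (intro sum.cong refl)
      fix i
      have "(\<Prod>l<k. x i l (idx l)) = x i j (idx j) * (\<Prod>l\<in>L. x i l (idx l))"
        unfolding kL using finL jL by simp
      also have "(\<Prod>l\<in>L. x i l (idx l)) = y i c" unfolding y_def by (intro prod.cong refl) (simp add: idxl)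
      finally show "(\<Prod>l<k. x i l (idx l)) = x i j a * y i c" using idxj by simp
    qed
    finally show ?thesis .
  qed
  define ny where "ny i = (\<Prod>l\<in>L. nx i l)" for i
  have Lk: "l < k" if "l \<in> L" for l using that unfolding L_def by auto
  have ny_pos: "ny i > 0" if "i < r" for i unfolding ny_def by (rule prod_pos) (use nx_pos[OF that] Lk in auto)
  have ysq: "(\<Sum>c<m. (y i c)\<^sup>2) = (ny i)\<^sup>2" for i
  proof -
    have "(\<Sum>c<m. (y i c)\<^sup>2) = (\<Sum>c<(\<Prod>l\<in>L. n l). \<Prod>l\<in>L. (\<lambda>l a. (x i l a)\<^sup>2) l (dig L n c l))"
      unfolding mL y_def by (simp add: prod_power_distrib)
    also have "\<dots> = (\<Prod>l\<in>L. \<Sum>a<n l. (x i l a)\<^sup>2)" by (rule prod_sum_digits[OF finL])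
    also have "\<dots> = (ny i)\<^sup>2" unfolding ny_def prod_power_distrib nx_sq ..
    finally show ?thesis .
  qed
  have yinner: "(\<Sum>c<m. y i c * y i' c) = (\<Prod>l\<in>L. vinner (n l) (x i l) (x i' l))" for i i'
  proof -
    have "(\<Sum>c<m. y i c * y i' c) = (\<Sum>c<(\<Prod>l\<in>L. n l). \<Prod>l\<in>L. (\<lambda>l a. x i l a * x i' l a) l (dig L n c l))"
      unfolding mL y_def by (simp add: prod.distrib)
    also have "\<dots> = (\<Prod>l\<in>L. \<Sum>a<n l. x i l a * x i' l a)" by (rule prod_sum_digits[OF finL])
    also have "\<dots> = (\<Prod>l\<in>L. vinner (n l) (x i l) (x i' l))" unfolding vinner_def ..
    finally show ?thesis .
  qed
  define p where "p i a = x i j a / nx i j" for i a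
  define p2 where "p2 i c = y i c / ny i" for i c
  have mu_le: "\<mu> / n l \<le> 1 / 2" if "l < k" for l
  proof -
    have "1 * (\<mu> / n l) \<le> real r * (\<mu> / n l)"
      by (rule mult_right_mono) (use rpos mupos in auto)
    then show ?thesis using eps[OF that] by linarith
  qed
  have gramU: "(\<Sum>i<r. (z i)\<^sup>2) \<le> 2 * (\<Sum>a<N. (\<Sum>i<r. z i * p i a)\<^sup>2)" for z
  proof (rule gram_bound[where \<epsilon> = "\<mu> / N"])
    fix i assume i: "i < r"
    have "(\<Sum>a<N. (p i a)\<^sup>2) = (\<Sum>a<n j. (x i j a)\<^sup>2) / (nx i j)\<^sup>2"
      unfolding p_def N_def by (simp add: power_divide sum_divide_distrib)
    then show "(\<Sum>a<N. (p i a)\<^sup>2) = 1" using nx_sq[of i j, symmetric] nx_pos[OF i j] by simp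
  next
    fix i i' assume ii: "i < r" "i' < r" "i \<noteq> i'"
    have "(\<Sum>a<N. p i a * p i' a) = vinner (n j) (x i j) (x i' j) / (nx i j * nx i' j)"
      unfolding p_def N_def vinner_def by (simp add: sum_divide_distrib)
    then show "\<bar>\<Sum>a<N. p i a * p i' a\<bar> \<le> \<mu> / N"
      using inner[OF ii j] nx_pos[OF ii(1) j] nx_pos[OF ii(2) j] unfolding N_def nx_def by simp
  next
    show "0 \<le> \<mu> / N" using mupos by simp
    show "real r * (\<mu> / N) \<le> 1 / 2" using eps[OF j] unfolding N_def .
  qed
  have "(if j = 0 then 1 else 0) \<in> L" using k2 unfolding L_def by auto
  then obtain l0 where l0: "l0 \<in> L" by blast
  define eps2 where "eps2 = (\<Prod>l\<in>L. \<mu> / n l)"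
  have eps2_0: "eps2 \<ge> 0" unfolding eps2_def using mupos by (auto intro: prod_nonneg)
  have reps2: "real r * eps2 \<le> 1 / 2"
  proof -
    have "eps2 = \<mu> / n l0 * (\<Prod>l\<in>L - {l0}. \<mu> / n l)"
      unfolding eps2_def by (rule prod.remove[OF finL l0])
    also have "\<dots> \<le> \<mu> / n l0 * 1"
    proof (rule mult_left_mono)
      show "(\<Prod>l\<in>L - {l0}. \<mu> / n l) \<le> 1"
      proof (rule prod_le_1)
        fix l assume "l \<in> L - {l0}"
        then have "l < k" using Lk by auto
        then have h: "\<mu> / n l \<le> 1 / 2" by (rule mu_le)
        have "0 \<le> \<mu> / n l" using mupos by simp
        with h show "0 \<le> \<mu> / n l \<and> \<mu> / n l \<le> 1" by linarith
      qed
    qed (use mupos in auto)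
    finally have "eps2 \<le> \<mu> / n l0" by simp
    then have "real r * eps2 \<le> real r * (\<mu> / n l0)" by (rule mult_left_mono) simp
    then show ?thesis using eps[OF Lk[OF l0]] by linarith
  qed
  have gramV: "(\<Sum>i<r. (z i)\<^sup>2) \<le> 2 * (\<Sum>c<m. (\<Sum>i<r. z i * p2 i c)\<^sup>2)" for z
  proof (rule gram_bound[where \<epsilon> = eps2])
    fix i assume i: "i < r"
    have "(\<Sum>c<m. (p2 i c)\<^sup>2) = (\<Sum>c<m. (y i c)\<^sup>2) / (ny i)\<^sup>2"
      unfolding p2_def by (simp add: power_divide sum_divide_distrib)
    then show "(\<Sum>c<m. (p2 i c)\<^sup>2) = 1" using ysq[of i] ny_pos[OF i] by simp
  next
    fix i i' assume ii: "i < r" "i' < r" "i \<noteq> i'"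
    have "(\<Sum>c<m. p2 i c * p2 i' c) = (\<Sum>c<m. y i c * y i' c) / (ny i * ny i')"
      unfolding p2_def by (simp add: sum_divide_distrib)
    also have "\<dots> = (\<Prod>l\<in>L. vinner (n l) (x i l) (x i' l) / (nx i l * nx i' l))"
      unfolding yinner ny_def prod.distrib[symmetric] prod_dividef ..
    finally have "\<bar>\<Sum>c<m. p2 i c * p2 i' c\<bar> = (\<Prod>l\<in>L. \<bar>vinner (n l) (x i l) (x i' l) / (nx i l * nx i' l)\<bar>)"
      by (simp add: abs_prod)
    also have "\<dots> = (\<Prod>l\<in>L. \<bar>vinner (n l) (x i l) (x i' l)\<bar> / (nx i l * nx i' l))"
    proof (intro prod.cong refl)
      fix l assume "l \<in> L"
      then have "0 < nx i l" "0 < nx i' l" using nx_pos ii Lk by auto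
      then show "\<bar>vinner (n l) (x i l) (x i' l) / (nx i l * nx i' l)\<bar> =
          \<bar>vinner (n l) (x i l) (x i' l)\<bar> / (nx i l * nx i' l)" by (simp add: abs_mult abs_divide)
    qed
    also have "\<dots> \<le> eps2" unfolding eps2_def
    proof (rule prod_mono)
      fix l assume l: "l \<in> L"
      show "0 \<le> \<bar>vinner (n l) (x i l) (x i' l)\<bar> / (nx i l * nx i' l) \<and>
          \<bar>vinner (n l) (x i l) (x i' l)\<bar> / (nx i l * nx i' l) \<le> \<mu> / n l"
        using inner[OF ii Lk[OF l]] nx_pos[OF ii(1) Lk[OF l]] nx_pos[OF ii(2) Lk[OF l]]
        unfolding nx_def by simp
    qed
    finally show "\<bar>\<Sum>c<m. p2 i c * p2 i' c\<bar> \<le> eps2" .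
  qed (use eps2_0 reps2 in auto)
  define W where "W = V * sinv S"
  have Wc: "W \<in> carrier_mat m \<rho>" unfolding W_def using V Si by auto
  define \<beta> where "\<beta> i c = nx i j * (\<Sum>c'<m. y i c' * W $$ (c', c))" for i c
  have Urep: "U $$ (a, c) = (\<Sum>i<r. p i a * \<beta> i c)" if ac: "a < N" "c < \<rho>" for a c
  proof -
    have "U $$ (a, c) = (A * W) $$ (a, c)" using st(6) unfolding W_def by simp
    also have "\<dots> = (\<Sum>c'<m. A $$ (a, c') * W $$ (c', c))" by (rule mult_entry[OF A Wc ac])
    also have "\<dots> = (\<Sum>c'<m. \<Sum>i<r. x i j a * y i c' * W $$ (c', c))"
      using Aent[OF ac(1)] by (simp add: sum_distrib_right)
    also have "\<dots> = (\<Sum>i<r. \<Sum>c'<m. x i j a * y i c' * W $$ (c', c))" by (rule sum.swap)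
    also have "\<dots> = (\<Sum>i<r. p i a * \<beta> i c)"
    proof (intro sum.cong refl)
      fix i assume "i \<in> {..<r}"
      then have "nx i j \<noteq> 0" using nx_pos j by force
      then show "(\<Sum>c'<m. x i j a * y i c' * W $$ (c', c)) = p i a * \<beta> i c"
        unfolding p_def \<beta>_def by (simp add: sum_distrib_left mult.assoc)
    qed
    finally show ?thesis .
  qed
  define W2 where "W2 = U * sinv S"
  have W2c: "W2 \<in> carrier_mat N \<rho>" unfolding W2_def using U Si by auto
  have At: "transpose_mat A \<in> carrier_mat m N" using A by auto
  define \<gamma> where "\<gamma> i b = ny i * (\<Sum>a<N. x i j a * W2 $$ (a, b))" for i b
  have Vrep: "V $$ (c, b) = (\<Sum>i<r. p2 i c * \<gamma> i b)" if cb: "c < m" "b < \<rho>" for c b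
  proof -
    have "V $$ (c, b) = (transpose_mat A * W2) $$ (c, b)" using st(7) unfolding W2_def by simp
    also have "\<dots> = (\<Sum>a<N. transpose_mat A $$ (c, a) * W2 $$ (a, b))" by (rule mult_entry[OF At W2c cb])
    also have "\<dots> = (\<Sum>a<N. \<Sum>i<r. x i j a * y i c * W2 $$ (a, b))"
      using Aent cb(1) A by (simp add: sum_distrib_right)
    also have "\<dots> = (\<Sum>i<r. \<Sum>a<N. x i j a * y i c * W2 $$ (a, b))" by (rule sum.swap)
    also have "\<dots> = (\<Sum>i<r. p2 i c * \<gamma> i b)"
    proof (intro sum.cong refl)
      fix i assume "i \<in> {..<r}"
      then have "ny i \<noteq> 0" using ny_pos by force
      then show "(\<Sum>a<N. x i j a * y i c * W2 $$ (a, b)) = p2 i c * \<gamma> i b"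
        unfolding p2_def \<gamma>_def by (simp add: sum_distrib_left ac_simps)
    qed
    finally show ?thesis .
  qed
  have r_le: "r \<le> \<rho>"
    unfolding \<rho>_def
  proof (rule rank_ge_r[OF svdA A, where p = p and q = "\<lambda>i c. nx i j * y i c"])
    fix a c assume ac: "a < N" "c < m"
    show "A $$ (a, c) = (\<Sum>i<r. p i a * (nx i j * y i c))"
      unfolding Aent[OF ac]
    proof (intro sum.cong refl)
      fix i assume "i \<in> {..<r}"
      then have "nx i j \<noteq> 0" using nx_pos j by force
      then show "x i j a * y i c = p i a * (nx i j * y i c)" unfolding p_def by simp
    qed
  next
    fix z :: "nat \<Rightarrow> real" and i
    assume h: "\<And>a. a < N \<Longrightarrow> (\<Sum>i<r. z i * p i a) = 0" and i: "i < r"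
    show "z i = 0" by (rule inj_from_gram[OF gramU h i])
  next
    fix z :: "nat \<Rightarrow> real" and i
    assume h: "\<And>c. c < m \<Longrightarrow> (\<Sum>i<r. z i * (nx i j * y i c)) = 0" and i: "i < r"
    define z' where "z' i = z i * nx i j * ny i" for i
    have h': "(\<Sum>i<r. z' i * p2 i c) = 0" if c: "c < m" for c
    proof -
      have "(\<Sum>i<r. z' i * p2 i c) = (\<Sum>i<r. z i * (nx i j * y i c))"
      proof (intro sum.cong refl)
        fix i assume "i \<in> {..<r}"
        then have "ny i \<noteq> 0" using ny_pos by force
        then show "z' i * p2 i c = z i * (nx i j * y i c)" unfolding z'_def p2_def by simp
      qed
      then show ?thesis using h[OF c] by simp
    qed
    have "z' i = 0" by (rule inj_from_gram[OF gramV h' i])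
    then show "z i = 0" unfolding z'_def using nx_pos[OF i j] ny_pos[OF i] by simp
  qed
  have Npos: "N > 0" unfolding N_def using npos[OF j] .
  have Urow: "(\<Sum>c<\<rho>. (U $$ (l, c))\<^sup>2) \<le> 2 * \<mu> * real \<rho> / real N" if l: "l < N" for l
  proof -
    have "(\<Sum>c<\<rho>. (U $$ (l, c))\<^sup>2) \<le> 2 * (\<Sum>i<r. (p i l)\<^sup>2)"
      by (rule row_bound[OF U st(4) Urep gramU l])
    also have "(\<Sum>i<r. (p i l)\<^sup>2) \<le> (\<Sum>i<r. \<mu> / N)"
    proof (rule sum_mono)
      fix i assume "i \<in> {..<r}"
      then show "(p i l)\<^sup>2 \<le> \<mu> / N" unfolding p_def N_def using xinf[of i j l] j l
        by (simp add: power_divide N_def)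
    qed
    also have "(\<Sum>i<r. \<mu> / N) = real r * \<mu> / N" by simp
    finally have "(\<Sum>c<\<rho>. (U $$ (l, c))\<^sup>2) \<le> 2 * (real r * \<mu> / N)" by simp
    also have "\<dots> \<le> 2 * (real \<rho> * \<mu> / N)"
      using r_le mupos Npos by (simp add: divide_right_mono mult_right_mono)
    finally show ?thesis by (simp add: ac_simps)
  qed
  have cardL: "card L = k - 1"
  proof -
    have "L = {..<k} - {j}" unfolding L_def by auto
    then show ?thesis using j by simp
  qed
  have eps2_eq: "eps2 = \<mu> ^ (k - 1) / real m"
    unfolding eps2_def mL prod_dividef by (simp add: cardL)
  have Vrow: "(\<Sum>b<\<rho>. (V $$ (c, b))\<^sup>2) \<le> 2 * \<mu> ^ (k - 1) * real \<rho> / real m"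
    if c: "c < m" for c
  proof -
    have "(\<Sum>b<\<rho>. (V $$ (c, b))\<^sup>2) \<le> 2 * (\<Sum>i<r. (p2 i c)\<^sup>2)"
      by (rule row_bound[OF V st(5) Vrep gramV c])
    also have "(\<Sum>i<r. (p2 i c)\<^sup>2) \<le> (\<Sum>i<r. eps2)"
    proof (rule sum_mono)
      fix i assume i: "i \<in> {..<r}"
      have "(p2 i c)\<^sup>2 = (\<Prod>l\<in>L. (x i l (dig L n c l))\<^sup>2 / (nx i l)\<^sup>2)"
        unfolding p2_def y_def ny_def power_divide prod_power_distrib prod_dividef ..
      also have "\<dots> \<le> eps2" unfolding eps2_def
      proof (rule prod_mono)
        fix l assume l: "l \<in> L"
        have dl: "dig L n c l < n l" unfolding dig_def using npos[OF Lk[OF l]] by simp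
        show "0 \<le> (x i l (dig L n c l))\<^sup>2 / (nx i l)\<^sup>2 \<and> (x i l (dig L n c l))\<^sup>2 / (nx i l)\<^sup>2 \<le> \<mu> / n l"
          using xinf[OF _ Lk[OF l] dl, of i] i by simp
      qed
      finally show "(p2 i c)\<^sup>2 \<le> eps2" .
    qed
    also have "(\<Sum>i<r. eps2) = real r * eps2" by simp
    finally have "(\<Sum>b<\<rho>. (V $$ (c, b))\<^sup>2) \<le> 2 * (real r * eps2)" by simp
    also have "\<dots> \<le> 2 * (real \<rho> * eps2)"
      using r_le eps2_0 by (simp add: mult_right_mono)
    finally show ?thesis unfolding eps2_eq by (simp add: ac_simps)
  qed
  have nU: "norm_2inf_sq U \<le> 2 * \<mu> * real \<rho> / real N"
    by (rule norm_2inf_sq_le) (use U Urow mupos in auto)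
  have nV: "norm_2inf_sq V \<le> 2 * \<mu> ^ (k - 1) * real \<rho> / real m"
    by (rule norm_2inf_sq_le) (use V Vrow mupos in auto)
  show ?thesis using nU nV rank unfolding \<rho>_def N_def m_def A_def by simp
qed

lemma mode_zero:
  fixes k :: nat and n :: "nat \<Rightarrow> nat" and T :: "(nat \<Rightarrow> nat) \<Rightarrow> real"
    and x :: "nat \<Rightarrow> nat \<Rightarrow> nat \<Rightarrow> real" and \<mu> :: real
  assumes decomp: "\<And>idx. (\<forall>j<k. idx j < n j) \<Longrightarrow> T idx = (\<Sum>i<(0::nat). \<Prod>j<k. x i j (idx j))"
    and j: "j < k"
    and svd: "compact_svd (unfold_mat k n j T) U S V"
  shows "dim_col U = vec_space.rank (n j) (unfold_mat k n j T) \<and>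
     norm_2inf_sq U \<le> 2 * \<mu> * real (vec_space.rank (n j) (unfold_mat k n j T)) / real (n j) \<and>
     norm_2inf_sq V \<le> 2 * \<mu> ^ (k - 1) * real (vec_space.rank (n j) (unfold_mat k n j T)) /
        real (other_dims_prod k n j)"
proof -
  define A where "A = unfold_mat k n j T"
  define N where "N = n j"
  define L where "L = {l. l < k \<and> l \<noteq> j}"
  define m where "m = other_dims_prod k n j"
  have finL: "finite L" unfolding L_def by auto
  have mL: "m = (\<Prod>l\<in>L. n l)" unfolding m_def other_dims_prod_def L_def ..
  have A: "A \<in> carrier_mat N m" unfolding A_def N_def m_def unfold_mat_def by auto
  have A0: "A = 0\<^sub>m N m"
  proof (rule eq_matI)
    fix a c assume "a < dim_row (0\<^sub>m N m :: real mat)" "c < dim_col (0\<^sub>m N m :: real mat)"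
    then have ac: "a < N" "c < m" by auto
    then have mpos: "m > 0" by simp
    then have np: "n l > 0" if "l \<in> L" for l using that finL unfolding mL by simp
    define idx where "idx = unfold_index k n j a c"
    have valid: "\<forall>l<k. idx l < n l"
    proof (intro allI impI)
      fix l assume l: "l < k"
      show "idx l < n l"
      proof (cases "l = j")
        case True then show ?thesis using ac unfolding idx_def unfold_index_def N_def by simp
      next
        case False
        then have "l \<in> L" using l unfolding L_def by auto
        then show ?thesis using np False l unfolding idx_def unfold_index_def by simp
      qed
    qed
    have "A $$ (a, c) = T idx" unfolding A_def idx_def
      using unfold_entry ac unfolding N_def m_def by blast
    also have "\<dots> = 0" using decomp valid by simp
    finally show "A $$ (a, c) = 0\<^sub>m N m $$ (a, c)" using ac by simp
  qed (use A in auto)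
  have svdA: "compact_svd A U S V" using svd unfolding A_def .
  have rk0: "vec_space.rank N A = 0" unfolding A0 by (rule vec_space.rank_0I)
  have dU: "dim_col U = 0" using svd_rank[OF svdA] A rk0 by auto
  note st = svd_struct[OF svdA]
  have dV: "dim_col V = 0" using st(3) dU by auto
  have nU: "norm_2inf_sq U \<le> 0" by (rule norm_2inf_sq_le) (use dU in auto)
  have nV: "norm_2inf_sq V \<le> 0" by (rule norm_2inf_sq_le) (use dV in auto)
  show ?thesis using dU nU nV rk0 unfolding A_def N_def by simp
qed

theorem lemma2p3:
  fixes k r :: nat and n :: "nat \<Rightarrow> nat" and T :: "(nat \<Rightarrow> nat) \<Rightarrow> real"
    and x :: "nat \<Rightarrow> nat \<Rightarrow> nat \<Rightarrow> real" and \<mu> :: real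
  assumes k2: "k \<ge> 2"
    and decomp: "\<And>idx. (\<forall>j<k. idx j < n j) \<Longrightarrow> T idx = (\<Sum>i<r. \<Prod>j<k. x i j (idx j))"
    and nonzero: "\<And>i j. i < r \<Longrightarrow> j < k \<Longrightarrow> \<exists>l<n j. x i j l \<noteq> 0"
    and rmu: "\<And>j. j < k \<Longrightarrow> real r * \<mu> \<le> real (n j) / 2"
    and spiky: "\<And>i j. i < r \<Longrightarrow> j < k \<Longrightarrow>
        (vnorm_inf (n j) (x i j))\<^sup>2 / (vnorm2 (n j) (x i j))\<^sup>2 \<le> \<mu> / real (n j)"
    and inner: "\<And>i i' j. i < r \<Longrightarrow> i' < r \<Longrightarrow> i \<noteq> i' \<Longrightarrow> j < k \<Longrightarrow>
        \<bar>vinner (n j) (x i j) (x i' j)\<bar> / (vnorm2 (n j) (x i j) * vnorm2 (n j) (x i' j))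
          \<le> \<mu> / real (n j)"
  shows "\<exists>\<mu>1 \<mu>2. \<mu>1 \<le> 2 * \<mu> \<and> \<mu>2 \<le> 2 * \<mu> ^ (k - 1) \<and> tensor_incoherent k n T \<mu>1 \<mu>2"
proof -
  have "tensor_incoherent k n T (2 * \<mu>) (2 * \<mu> ^ (k - 1))"
    unfolding tensor_incoherent_def Let_def
  proof (intro allI impI)
    fix j U S V assume j: "j < k" and svd: "compact_svd (unfold_mat k n j T) U S V"
    show "dim_col U = vec_space.rank (n j) (unfold_mat k n j T) \<and>
       norm_2inf_sq U \<le> 2 * \<mu> * real (vec_space.rank (n j) (unfold_mat k n j T)) / real (n j) \<and>
       norm_2inf_sq V \<le> 2 * \<mu> ^ (k - 1) * real (vec_space.rank (n j) (unfold_mat k n j T)) /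
          real (other_dims_prod k n j)"
    proof (cases "r = 0")
      case True
      show ?thesis by (rule mode_zero[OF _ j svd]) (use decomp True in auto)
    next
      case False
      then have "r > 0" by simp
      show ?thesis by (rule mode_pos[OF k2 decomp nonzero rmu spiky inner \<open>r > 0\<close> j svd])
    qed
  qed
  then show ?thesis by blast
qed

end
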